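(* For integers $1\le k<d$, the truncated binomial $P_{k;d}(x)=\sum_{j=0}^{k}\binom{d}{j}x^j$ has no multiple roots. *)

theory Defs
  imports "HOL-Computational_Algebra.Polynomial"
begin

definition trunc_binom :: "nat \<Rightarrow> nat \<Rightarrow> complex poly" where
  "trunc_binom k d = (\<Sum>j\<le>k. monom (of_nat (d choose j)) j)"

end

theory Submission
  imports Defs
begin

lemma tb_Suc: "trunc_binom (Suc k) d = trunc_binom k d + monom (of_nat (d choose Suc k)) (Suc k)"
  by (simp add: trunc_binom_def)

lemma tb_0: "trunc_binom 0 d = 1"
  by (simp add: trunc_binom_def one_poly_def monom_0)

lemma binom_id: "of_nat (Suc k) * (of_nat (d choose Suc k) :: complex) = of_nat d * of_nat (d - 1 choose k)"
proof (cases d)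
  case 0 then show ?thesis by simp
next
  case (Suc n)
  have "Suc k * (Suc n choose Suc k) = Suc n * (n choose k)" by (rule Suc_times_binomial)
  then have "(of_nat (Suc k * (Suc n choose Suc k)) :: complex) = of_nat (Suc n * (n choose k))" by metis
  then show ?thesis using Suc by (simp only: of_nat_mult) simp
qed

lemma binom_id2: "(of_nat (d choose Suc k) :: complex) = of_nat (d - 1 choose Suc k) + of_nat (d - 1 choose k)" if "d \<ge> 1"
proof -
  have "d = Suc (d - 1)" using that by simp
  then obtain n where "d = Suc n" by blast
  then show ?thesis by simp
qed

lemma key: "(1 + z) * poly (pderiv (trunc_binom k d)) z
   = of_nat d * poly (trunc_binom k d) z - of_nat d * of_nat (d - 1 choose k) * z ^ k"
proof (induction k)
  case 0
  then show ?case by (simp add: tb_0)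
next
  case (Suc k)
  have e1: "(1 + z) * poly (pderiv (trunc_binom (Suc k) d)) z =
     (1 + z) * poly (pderiv (trunc_binom k d)) z + (1+z) * (of_nat (Suc k) * of_nat (d choose Suc k)) * z ^ k"
    by (simp add: tb_Suc pderiv_add pderiv_monom poly_monom algebra_simps)
  show ?case
  proof (cases "d = 0")
    case True then show ?thesis unfolding e1 Suc.IH by simp
  next
    case False
    then have "d \<ge> 1" by simp
    from binom_id2[OF this, of k] have b2: "(of_nat (d choose Suc k) :: complex) = of_nat (d - 1 choose Suc k) + of_nat (d - 1 choose k)" .
    have "(1 + z) * poly (pderiv (trunc_binom (Suc k) d)) z = of_nat d * poly (trunc_binom k d) z - of_nat d * of_nat (d - 1 choose k) * z ^ k + (1+z) * (of_nat d * of_nat (d - 1 choose k)) * z ^ k"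
      using e1 Suc.IH binom_id by simp
    also have "\<dots> = of_nat d * poly (trunc_binom (Suc k) d) z - of_nat d * of_nat (d - 1 choose Suc k) * z ^ Suc k"
      by (simp add: tb_Suc poly_monom b2 algebra_simps)
    finally show ?thesis .
  qed
qed

theorem mainTheorem3:
  fixes k d :: nat
  assumes "1 \<le> k" and "k < d"
  shows "rsquarefree (trunc_binom k d)"
  unfolding rsquarefree_roots
proof (intro allI notI)
  fix z assume h: "poly (trunc_binom k d) z = 0 \<and> poly (pderiv (trunc_binom k d)) z = 0"
  have "of_nat d * of_nat (d - 1 choose k) * z ^ k = 0"
    using key[of z k d] h by simp
  moreover have "d - 1 choose k \<noteq> 0" using assms by simp
  ultimately have z0: "z = 0" using assms by simp
  have "poly (trunc_binom k d) 0 = 1"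
    by (simp add: trunc_binom_def poly_sum poly_monom zero_power)
  then show False using h z0 by simp
qed

end
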